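(* Let $u:X\to\mathbb{R}$ be non-constant affine. Let $\succ_{HP}$ be a hope-and-prepare preference with unique representation $(u,C_{HP},D_{HP})$, $\succ_T$ a twofold multiprior preference with unique representation $(u,C_T,D_T)$, and $\succ_B$ a Bewley preference with unique representation $(u,C_B)$. Then: (i) $\succ_B$ is more conservative than $\succ_{HP}$ if and only if $C_{HP}\cup D_{HP}\subseteq C_B$; (ii) $\succ_T$ is more conservative than $\succ_{HP}$ if and only if $C_{HP}\subseteq C_T$ and $D_{HP}\subseteq D_T$.
   Context: $S$ is a set of states with algebra $\Sigma$; $X$ is a non-singleton convex subset of a real vector space; $\mathcal{F}$ is the set of simple acts $f:S\to X$ ($\Sigma$-measurable, finitely many values); $\Delta$ is the set of finitely additive probability measures on $(S,\Sigma)$ with weak* topology. A relation $\succ$ on $\mathcal{F}$ is a hope-and-prepare preference with representation $(u,C,D)$ ($C,D\subseteq\Delta$ convex compact, $C\cap D\ne\emptyset$) if $f\succ g$ iff $\min_{p\in C}\int u(f)dp>\min_{p\in C}\int u(g)dp$ and $\max_{p\in D}\int u(f)dp>\max_{p\in D}\int u(g)dp$. It is a twofold multiprior preference with representation $(u,C,D)$ ($C,D$ convex compact, $C\cap D\ne\emptyset$) if $f\succ g$ iff $\min_{p\in C}\int u(f)dp>\max_{p\in D}\int u(g)dp$. It is a Bewley preference with representation $(u,C)$ ($C$ non-empty convex compact) if $f\succ g$ iff $\int u(f)dp>\int u(g)dp$ for all $p\in C$. "Unique representation" means the sets are unique and $u$ is unique up to positive affine transformation. $\succ_1$ is more conservative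 than $\succ_2$ if $f\succ_1 g$ implies $f\succ_2 g$ for all $f,g\in\mathcal{F}$. *)

theory Defs
  imports "HOL-Analysis.Analysis"
begin

text \<open>States are the elements of the type 's; Alg is an algebra of subsets of UNIV.
  Outcomes live in a convex set X of a real vector space 'x.\<close>

definition simple_acts :: "'s set set \<Rightarrow> 'x set \<Rightarrow> ('s \<Rightarrow> 'x) set" where
  "simple_acts Alg X = {f. (\<forall>s. f s \<in> X) \<and> finite (range f) \<and> (\<forall>x. f -` {x} \<in> Alg)}"

definition fa_probs :: "'s set set \<Rightarrow> ('s set \<Rightarrow> real) set" where
  "fa_probs Alg = {p. (\<forall>A. A \<notin> Alg \<longrightarrow> p A = 0) \<and> (\<forall>A\<in>Alg. 0 \<le> p A) \<and> p UNIV = 1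
     \<and> (\<forall>A\<in>Alg. \<forall>B\<in>Alg. A \<inter> B = {} \<longrightarrow> p (A \<union> B) = p A + p B)}"

definition sint :: "('s set \<Rightarrow> real) \<Rightarrow> ('s \<Rightarrow> real) \<Rightarrow> real" where
  "sint p g = (\<Sum>r\<in>range g. r * p (g -` {r}))"

definition convex_probs :: "('s set \<Rightarrow> real) set \<Rightarrow> bool" where
  "convex_probs C \<longleftrightarrow> (\<forall>p\<in>C. \<forall>q\<in>C. \<forall>t::real. 0 \<le> t \<and> t \<le> 1 \<longrightarrow> (\<lambda>A. t * p A + (1 - t) * q A) \<in> C)"

text \<open>Weak* compactness: on the set of probability charges the weak* topology is the
  topology of setwise convergence on Alg (product topology on Alg \<rightarrow> real).\<close>
definition wstar_compact :: "'s set set \<Rightarrow> ('s set \<Rightarrow> real) set \<Rightarrow> bool" where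
  "wstar_compact Alg C \<longleftrightarrow> compactin (product_topology (\<lambda>_. euclideanreal) Alg) ((\<lambda>p. restrict p Alg) ` C)"

definition good_prior_set :: "'s set set \<Rightarrow> ('s set \<Rightarrow> real) set \<Rightarrow> bool" where
  "good_prior_set Alg C \<longleftrightarrow> C \<subseteq> fa_probs Alg \<and> convex_probs C \<and> wstar_compact Alg C"

definition affine_on :: "'x::real_vector set \<Rightarrow> ('x \<Rightarrow> real) \<Rightarrow> bool" where
  "affine_on X u \<longleftrightarrow> (\<forall>x\<in>X. \<forall>y\<in>X. \<forall>t::real. 0 \<le> t \<and> t \<le> 1 \<longrightarrow>
      u (t *\<^sub>R x + (1 - t) *\<^sub>R y) = t * u x + (1 - t) * u y)"

definition minE :: "('s set \<Rightarrow> real) set \<Rightarrow> ('s \<Rightarrow> real) \<Rightarrow> real" where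
  "minE C g = Inf ((\<lambda>p. sint p g) ` C)"

definition maxE :: "('s set \<Rightarrow> real) set \<Rightarrow> ('s \<Rightarrow> real) \<Rightarrow> real" where
  "maxE C g = Sup ((\<lambda>p. sint p g) ` C)"

definition HP_rep :: "'s set set \<Rightarrow> 'x::real_vector set \<Rightarrow> (('s \<Rightarrow> 'x) \<Rightarrow> ('s \<Rightarrow> 'x) \<Rightarrow> bool)
    \<Rightarrow> ('x \<Rightarrow> real) \<Rightarrow> ('s set \<Rightarrow> real) set \<Rightarrow> ('s set \<Rightarrow> real) set \<Rightarrow> bool" where
  "HP_rep Alg X P u C D \<longleftrightarrow> affine_on X u \<and> good_prior_set Alg C \<and> good_prior_set Alg D \<and> C \<inter> D \<noteq> {}
     \<and> (\<forall>f\<in>simple_acts Alg X. \<forall>g\<in>simple_acts Alg X.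
          P f g \<longleftrightarrow> minE C (u \<circ> f) > minE C (u \<circ> g) \<and> maxE D (u \<circ> f) > maxE D (u \<circ> g))"

definition TM_rep :: "'s set set \<Rightarrow> 'x::real_vector set \<Rightarrow> (('s \<Rightarrow> 'x) \<Rightarrow> ('s \<Rightarrow> 'x) \<Rightarrow> bool)
    \<Rightarrow> ('x \<Rightarrow> real) \<Rightarrow> ('s set \<Rightarrow> real) set \<Rightarrow> ('s set \<Rightarrow> real) set \<Rightarrow> bool" where
  "TM_rep Alg X P u C D \<longleftrightarrow> affine_on X u \<and> good_prior_set Alg C \<and> good_prior_set Alg D \<and> C \<inter> D \<noteq> {}
     \<and> (\<forall>f\<in>simple_acts Alg X. \<forall>g\<in>simple_acts Alg X.
          P f g \<longleftrightarrow> minE C (u \<circ> f) > maxE D (u \<circ> g))"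

definition B_rep :: "'s set set \<Rightarrow> 'x::real_vector set \<Rightarrow> (('s \<Rightarrow> 'x) \<Rightarrow> ('s \<Rightarrow> 'x) \<Rightarrow> bool)
    \<Rightarrow> ('x \<Rightarrow> real) \<Rightarrow> ('s set \<Rightarrow> real) set \<Rightarrow> bool" where
  "B_rep Alg X P u C \<longleftrightarrow> affine_on X u \<and> good_prior_set Alg C \<and> C \<noteq> {}
     \<and> (\<forall>f\<in>simple_acts Alg X. \<forall>g\<in>simple_acts Alg X.
          P f g \<longleftrightarrow> (\<forall>p\<in>C. sint p (u \<circ> f) > sint p (u \<circ> g)))"

definition pos_affine_equiv :: "'x set \<Rightarrow> ('x \<Rightarrow> real) \<Rightarrow> ('x \<Rightarrow> real) \<Rightarrow> bool" where
  "pos_affine_equiv X v u \<longleftrightarrow> (\<exists>a>0. \<exists>b. \<forall>x\<in>X. v x = a * u x + b)"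

definition HP_unique_rep where
  "HP_unique_rep Alg X P u C D \<longleftrightarrow> HP_rep Alg X P u C D \<and>
     (\<forall>v C' D'. HP_rep Alg X P v C' D' \<longrightarrow> C' = C \<and> D' = D \<and> pos_affine_equiv X v u)"

definition TM_unique_rep where
  "TM_unique_rep Alg X P u C D \<longleftrightarrow> TM_rep Alg X P u C D \<and>
     (\<forall>v C' D'. TM_rep Alg X P v C' D' \<longrightarrow> C' = C \<and> D' = D \<and> pos_affine_equiv X v u)"

definition B_unique_rep where
  "B_unique_rep Alg X P u C \<longleftrightarrow> B_rep Alg X P u C \<and>
     (\<forall>v C'. B_rep Alg X P v C' \<longrightarrow> C' = C \<and> pos_affine_equiv X v u)"

definition more_conservative :: "('s \<Rightarrow> 'x) set \<Rightarrow> (('s \<Rightarrow> 'x) \<Rightarrow> ('s \<Rightarrow> 'x) \<Rightarrow> bool)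
    \<Rightarrow> (('s \<Rightarrow> 'x) \<Rightarrow> ('s \<Rightarrow> 'x) \<Rightarrow> bool) \<Rightarrow> bool" where
  "more_conservative F P1 P2 \<longleftrightarrow> (\<forall>f\<in>F. \<forall>g\<in>F. P1 f g \<longrightarrow> P2 f g)"

end

theory Submission
  imports Defs "HOL-Analysis.Analysis"
begin


definition smeas :: "'s set set \<Rightarrow> ('s \<Rightarrow> 'b) \<Rightarrow> bool" where
  "smeas Alg g \<longleftrightarrow> finite (range g) \<and> (\<forall>x. g -` {x} \<in> Alg)"

lemma fa_empty: "p \<in> fa_probs Alg \<Longrightarrow> p {} = 0"
proof -
  assume p: "p \<in> fa_probs Alg"
  show ?thesis
  proof (cases "{} \<in> Alg")
    case True
    then have "p ({} \<union> {}) = p {} + p {}" using p unfolding fa_probs_def by blast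
    then show ?thesis by simp
  next
    case False then show ?thesis using p unfolding fa_probs_def by blast
  qed
qed

lemma fa_UN:
  assumes alg: "algebra UNIV Alg" and p: "p \<in> fa_probs Alg" and fin: "finite I"
  shows "(\<forall>i\<in>I. P i \<in> Alg) \<Longrightarrow> disjoint_family_on P I \<Longrightarrow> p (\<Union>i\<in>I. P i) = (\<Sum>i\<in>I. p (P i))"
  using fin
proof (induction I rule: finite_induct)
  case empty then show ?case using fa_empty[OF p] by simp
next
  case (insert i I)
  have d: "disjoint_family_on P I" using insert.prems(2) by (auto simp: disjoint_family_on_def)
  have U: "(\<Union>j\<in>I. P j) \<in> Alg" using insert alg by (intro ring_of_sets.finite_UN algebra.axioms(1)) auto
  have "P i \<inter> (\<Union>j\<in>I. P j) = {}" using insert.prems(2) insert.hyps(2)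
    by (auto simp: disjoint_family_on_def)
  then have "p (P i \<union> (\<Union>j\<in>I. P j)) = p (P i) + p (\<Union>j\<in>I. P j)"
    using p U insert.prems(1) unfolding fa_probs_def by blast
  then show ?case using insert d by simp
qed

lemma partition_sint:
  assumes alg: "algebra UNIV Alg" and p: "p \<in> fa_probs Alg" and fin: "finite I"
    and PA: "\<forall>i\<in>I. P i \<in> Alg" and dj: "disjoint_family_on P I"
    and cov: "(\<Union>i\<in>I. P i) = UNIV" and gv: "\<forall>i\<in>I. \<forall>s\<in>P i. g s = v i"
  shows "sint p g = (\<Sum>i\<in>I. v i * p (P i))"
proof -
  have rg: "range g \<subseteq> v ` I"
  proof
    fix r assume "r \<in> range g"
    then obtain s where s: "r = g s" by auto
    from cov obtain i where "i \<in> I" "s \<in> P i" by blast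
    then show "r \<in> v ` I" using gv s by auto
  qed
  have pre: "g -` {r} = (\<Union>i\<in>{i\<in>I. v i = r}. P i)" for r
  proof
    show "g -` {r} \<subseteq> (\<Union>i\<in>{i\<in>I. v i = r}. P i)"
    proof
      fix s assume "s \<in> g -` {r}"
      moreover from cov obtain i where "i \<in> I" "s \<in> P i" by blast
      ultimately show "s \<in> (\<Union>i\<in>{i\<in>I. v i = r}. P i)" using gv by auto
    qed
  next
    show "(\<Union>i\<in>{i\<in>I. v i = r}. P i) \<subseteq> g -` {r}" using gv by auto
  qed
  have pp: "p (g -` {r}) = (\<Sum>i\<in>{i\<in>I. v i = r}. p (P i))" for r
    unfolding pre using fin PA dj
    by (intro fa_UN[OF alg p]) (auto simp: disjoint_family_on_def)
  have "sint p g = (\<Sum>r\<in>v ` I. r * p (g -` {r}))"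
    unfolding sint_def
  proof (rule sum.mono_neutral_left)
    show "finite (v ` I)" using fin by simp
    show "range g \<subseteq> v ` I" by (rule rg)
    show "\<forall>i\<in>v ` I - range g. i * p (g -` {i}) = 0"
    proof
      fix r assume "r \<in> v ` I - range g"
      then have "g -` {r} = {}" by blast
      then show "r * p (g -` {r}) = 0" using fa_empty[OF p] by simp
    qed
  qed
  also have "\<dots> = (\<Sum>r\<in>v ` I. (\<Sum>i\<in>{i\<in>I. v i = r}. v i * p (P i)))"
    unfolding pp sum_distrib_left by (intro sum.cong refl) auto
  also have "\<dots> = (\<Sum>i\<in>I. v i * p (P i))"
    using sum.image_gen[OF fin, of "\<lambda>i. v i * p (P i)" v] by simp
  finally show ?thesis .
qed

lemma smeas_comb:
  assumes alg: "algebra UNIV Alg" and g: "smeas Alg g" and h: "smeas Alg h"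
  shows "smeas Alg (\<lambda>s. G (g s) (h s))"
proof -
  have fin: "finite (range g \<times> range h)" using g h unfolding smeas_def by simp
  have "range (\<lambda>s. G (g s) (h s)) \<subseteq> (\<lambda>(a,b). G a b) ` (range g \<times> range h)" by fastforce
  then have f1: "finite (range (\<lambda>s. G (g s) (h s)))" using fin finite_subset by blast
  have "(\<lambda>s. G (g s) (h s)) -` {r} \<in> Alg" for r
  proof -
    have eq: "(\<lambda>s. G (g s) (h s)) -` {r} = (\<Union>ab\<in>{ab\<in>range g \<times> range h. G (fst ab) (snd ab) = r}. g -` {fst ab} \<inter> h -` {snd ab})"
      by force
    show ?thesis unfolding eq using fin g h alg
      by (intro ring_of_sets.finite_UN[OF algebra.axioms(1)[OF alg]]) (auto simp: smeas_def intro: semiring_of_sets.Int[OF ring_of_sets.axioms(1)[OF algebra.axioms(1)[OF alg]]])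
  qed
  then show ?thesis using f1 unfolding smeas_def by blast
qed

lemma smeas_map:
  assumes alg: "algebra UNIV Alg" and g: "smeas Alg g"
  shows "smeas Alg (\<lambda>s. m (g s))"
  using smeas_comb[OF alg g g, of "\<lambda>a b. m a"] by simp

lemma smeas_const:
  assumes alg: "algebra UNIV Alg"
  shows "smeas Alg (\<lambda>s. c)"
proof -
  have "(\<lambda>s. c) -` {x} = (if x = c then UNIV else {})" for x by auto
  then show ?thesis unfolding smeas_def using alg
    by (simp add: algebra.top semiring_of_sets.empty_sets[OF ring_of_sets.axioms(1)[OF algebra.axioms(1)[OF alg]]])
qed

lemma smeas_ind:
  assumes alg: "algebra UNIV Alg" and A: "A \<in> Alg"
  shows "smeas Alg (\<lambda>s. indicator A s :: real)"
proof -
  have "(\<lambda>s. indicator A s :: real) -` {x} = (if x = 1 then A else if x = 0 then UNIV - A else {})" for x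
    by (auto simp: indicator_def)
  moreover have "range (\<lambda>s. indicator A s :: real) \<subseteq> {0,1}" by (auto simp: indicator_def)
  ultimately show ?thesis unfolding smeas_def using alg A
    by (auto simp: algebra.top semiring_of_sets.empty_sets[OF ring_of_sets.axioms(1)[OF algebra.axioms(1)[OF alg]]] algebra.compl_sets finite_subset)
qed

lemma sint_lin:
  assumes alg: "algebra UNIV Alg" and p: "p \<in> fa_probs Alg"
    and g: "smeas Alg g" and h: "smeas Alg h"
  shows "sint p (\<lambda>s. a * g s + b * h s) = a * sint p g + b * sint p h"
proof -
  let ?I = "range g \<times> range h"
  let ?P = "\<lambda>ab. g -` {fst ab} \<inter> h -` {snd ab}"
  have fin: "finite ?I" using g h unfolding smeas_def by simp
  have PA: "\<forall>i\<in>?I. ?P i \<in> Alg" using g h alg by (auto simp: smeas_def intro: semiring_of_sets.Int[OF ring_of_sets.axioms(1)[OF algebra.axioms(1)[OF alg]]])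
  have dj: "disjoint_family_on ?P ?I" by (auto simp: disjoint_family_on_def)
  have cov: "(\<Union>i\<in>?I. ?P i) = UNIV" by auto
  have e1: "sint p (\<lambda>s. a * g s + b * h s) = (\<Sum>i\<in>?I. (a * fst i + b * snd i) * p (?P i))"
    by (rule partition_sint[OF alg p fin PA dj cov]) auto
  have e2: "sint p g = (\<Sum>i\<in>?I. fst i * p (?P i))"
    by (rule partition_sint[OF alg p fin PA dj cov]) auto
  have e3: "sint p h = (\<Sum>i\<in>?I. snd i * p (?P i))"
    by (rule partition_sint[OF alg p fin PA dj cov]) auto
  show ?thesis unfolding e1 e2 e3
    by (simp add: algebra_simps sum.distrib sum_distrib_left)
qed

lemma sint_const:
  assumes alg: "algebra UNIV Alg" and p: "p \<in> fa_probs Alg"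
  shows "sint p (\<lambda>s. c) = c"
proof -
  have "sint p (\<lambda>s. c) = (\<Sum>i\<in>{()}. c * p UNIV)"
    by (rule partition_sint[OF alg p]) (auto simp: algebra.top[OF alg] disjoint_family_on_def)
  then show ?thesis using p by (simp add: fa_probs_def)
qed

lemma sint_ind:
  assumes alg: "algebra UNIV Alg" and p: "p \<in> fa_probs Alg" and A: "A \<in> Alg"
  shows "sint p (\<lambda>s. indicator A s) = p A"
proof -
  let ?P = "\<lambda>b. if b then A else UNIV - A"
  have "sint p (\<lambda>s. indicator A s) = (\<Sum>b\<in>{True,False}. (if b then 1 else 0) * p (?P b))"
    by (rule partition_sint[OF alg p]) 
       (auto simp: A algebra.compl_sets[OF alg] disjoint_family_on_def indicator_def)
  then show ?thesis by simp
qed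

lemma sint_bounds:
  assumes alg: "algebra UNIV Alg" and p: "p \<in> fa_probs Alg" and g: "smeas Alg g"
    and lo: "\<forall>s. a \<le> g s" and hi: "\<forall>s. g s \<le> b"
  shows "a \<le> sint p g \<and> sint p g \<le> b"
proof -
  let ?I = "range g" and ?P = "\<lambda>r. g -` {r}"
  have fin: "finite ?I" and PA: "\<forall>i\<in>?I. ?P i \<in> Alg" using g by (auto simp: smeas_def)
  have dj: "disjoint_family_on ?P ?I" by (auto simp: disjoint_family_on_def)
  have cov: "(\<Union>i\<in>?I. ?P i) = UNIV" by auto
  have s: "(\<Sum>i\<in>?I. p (?P i)) = 1"
    using fa_UN[OF alg p fin PA dj] cov p by (simp add: fa_probs_def)
  have nn: "\<forall>i\<in>?I. 0 \<le> p (?P i)" using PA p by (auto simp: fa_probs_def)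
  have e: "sint p g = (\<Sum>i\<in>?I. i * p (?P i))" by (simp add: sint_def)
  have "(\<Sum>i\<in>?I. a * p (?P i)) \<le> (\<Sum>i\<in>?I. i * p (?P i))"
    using nn lo by (intro sum_mono mult_right_mono) auto
  moreover have "(\<Sum>i\<in>?I. i * p (?P i)) \<le> (\<Sum>i\<in>?I. b * p (?P i))"
    using nn hi by (intro sum_mono mult_right_mono) auto
  ultimately show ?thesis using s e by (simp add: sum_distrib_left[symmetric])
qed

lemma sint_lincomb:
  assumes alg: "algebra UNIV Alg" and p: "p \<in> fa_probs Alg" and fin: "finite F" and FA: "F \<subseteq> Alg"
  shows "smeas Alg (\<lambda>s. \<Sum>A\<in>F. w A * indicator A s) \<and> sint p (\<lambda>s. \<Sum>A\<in>F. w A * indicator A s) = (\<Sum>A\<in>F. w A * p A)"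
  using fin FA
proof (induction F rule: finite_induct)
  case empty
  then show ?case using sint_const[OF alg p, of 0] smeas_const[OF alg, of "0::real"] by simp
next
  case (insert A F)
  have sA: "smeas Alg (\<lambda>s. indicator A s :: real)" using insert smeas_ind[OF alg] by auto
  have IH: "smeas Alg (\<lambda>s. \<Sum>A\<in>F. w A * indicator A s)" "sint p (\<lambda>s. \<Sum>A\<in>F. w A * indicator A s) = (\<Sum>A\<in>F. w A * p A)"
    using insert by auto
  have eq: "(\<lambda>s. \<Sum>B\<in>insert A F. w B * indicator B s) = (\<lambda>s. w A * indicator A s + 1 * (\<Sum>B\<in>F. w B * indicator B s))"
    by (rule ext, subst sum.insert[OF insert(1,2)], simp only: mult_1_left)
  show ?case unfolding eq
    using sint_lin[OF alg p sA IH(1), of "w A" 1] IH sint_ind[OF alg p, of A] insert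
      smeas_comb[OF alg sA IH(1), of "\<lambda>x y. w A * x + 1 * y"]
    by simp
qed


abbreviation "PTop Alg \<equiv> product_topology (\<lambda>_. euclideanreal) Alg"

lemma img_compact:
  assumes wc: "wstar_compact Alg C" and cm: "continuous_map (PTop Alg) euclideanreal \<Phi>"
    and G: "\<forall>p\<in>C. G p = \<Phi> (restrict p Alg)"
  shows "compact (G ` C)"
proof -
  have eq: "G ` C = \<Phi> ` ((\<lambda>p. restrict p Alg) ` C)" unfolding image_image using G by (intro image_cong) auto
  have "compactin euclideanreal (\<Phi> ` ((\<lambda>p. restrict p Alg) ` C))"
    using image_compactin[OF wc[unfolded wstar_compact_def] cm] .
  then show ?thesis unfolding eq by simp
qed

lemma sint_compact:
  assumes wc: "wstar_compact Alg C" and h: "smeas Alg h"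
  shows "compact ((\<lambda>p. sint p h) ` C)"
proof (rule img_compact[OF wc])
  show "continuous_map (PTop Alg) euclideanreal (\<lambda>q. \<Sum>r\<in>range h. r * q (h -` {r}))"
    using h unfolding smeas_def
    by (intro continuous_map_sum continuous_map_real_mult_left continuous_map_product_projection) auto
  show "\<forall>p\<in>C. sint p h = (\<Sum>r\<in>range h. r * (restrict p Alg) (h -` {r}))"
    using h unfolding smeas_def sint_def by simp
qed

lemma minE_att:
  assumes gp: "good_prior_set Alg C" and ne: "C \<noteq> {}" and h: "smeas Alg h"
  shows "(\<exists>p\<in>C. minE C h = sint p h) \<and> (\<forall>q\<in>C. minE C h \<le> sint q h)"
proof -
  let ?S = "(\<lambda>p. sint p h) ` C"
  have c: "compact ?S" using sint_compact gp h unfolding good_prior_set_def by blast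
  have b: "bdd_below ?S" by (intro bounded_imp_bdd_below compact_imp_bounded c)
  have "Inf ?S \<in> ?S" using closed_contains_Inf[OF _ b compact_imp_closed[OF c]] ne by blast
  moreover have "\<forall>q\<in>C. Inf ?S \<le> sint q h" using b by (auto intro: cInf_lower)
  ultimately show ?thesis unfolding minE_def by auto
qed

lemma maxE_att:
  assumes gp: "good_prior_set Alg C" and ne: "C \<noteq> {}" and h: "smeas Alg h"
  shows "(\<exists>p\<in>C. maxE C h = sint p h) \<and> (\<forall>q\<in>C. sint q h \<le> maxE C h)"
proof -
  let ?S = "(\<lambda>p. sint p h) ` C"
  have c: "compact ?S" using sint_compact gp h unfolding good_prior_set_def by blast
  have b: "bdd_above ?S" by (intro bounded_imp_bdd_above compact_imp_bounded c)
  have "Sup ?S \<in> ?S" using closed_contains_Sup[OF _ b compact_imp_closed[OF c]] ne by blast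
  moreover have "\<forall>q\<in>C. sint q h \<le> Sup ?S" using b by (auto intro: cSup_upper)
  ultimately show ?thesis unfolding maxE_def by auto
qed



lemma fip_sep:
  assumes alg: "algebra UNIV Alg" and gp: "good_prior_set Alg C" and ne: "C \<noteq> {}"
    and p0: "p0 \<in> fa_probs Alg" and nC: "p0 \<notin> C"
  shows "\<exists>F. finite F \<and> F \<subseteq> Alg \<and> (\<forall>p\<in>C. \<exists>A\<in>F. p A \<noteq> p0 A)"
proof (rule ccontr)
  assume neg: "\<not> ?thesis"
  let ?K = "(\<lambda>p. restrict p Alg) ` C"
  let ?Z = "\<lambda>A. {q \<in> topspace (PTop Alg). q A \<in> {p0 A}}"
  let ?U = "?Z ` Alg"
  have K: "compactin (PTop Alg) ?K" using gp unfolding good_prior_set_def wstar_compact_def by blast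
  have cl: "\<forall>Z\<in>?U. closedin (PTop Alg) Z"
  proof
    fix Z assume "Z \<in> ?U"
    then obtain A where A: "A \<in> Alg" "Z = ?Z A" by blast
    show "closedin (PTop Alg) Z" unfolding A(2)
      by (rule closedin_continuous_map_preimage[OF continuous_map_product_projection[OF A(1)]]) simp
  qed
  have fi: "\<forall>\<F>. finite \<F> \<and> \<F> \<subseteq> ?U \<longrightarrow> ?K \<inter> \<Inter>\<F> \<noteq> {}"
  proof (intro allI impI)
    fix \<F> assume "finite \<F> \<and> \<F> \<subseteq> ?U"
    then obtain F where F: "F \<subseteq> Alg" "finite F" "\<F> = ?Z ` F" using finite_subset_image[of \<F> ?Z Alg] by blast
    have "\<not> (\<forall>p\<in>C. \<exists>A\<in>F. p A \<noteq> p0 A)" using neg F(1,2) by blast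
    then obtain p where p: "p \<in> C" "\<forall>A\<in>F. p A = p0 A" by blast
    have "restrict p Alg \<in> ?K" using p by blast
    moreover have "restrict p Alg \<in> \<Inter>\<F>"
    proof -
      have "restrict p Alg \<in> ?Z A" if "A \<in> F" for A
        using that F(1) p(2) by auto
      then show ?thesis unfolding F(3) by blast
    qed
    ultimately show "?K \<inter> \<Inter>\<F> \<noteq> {}" by blast
  qed
  have "?K \<inter> \<Inter>?U \<noteq> {}"
    using mp[OF spec[OF conjunct2[OF K[unfolded compactin_fip]], of ?U] conjI[OF cl fi]] .
  then obtain p where p: "p \<in> C" "restrict p Alg \<in> \<Inter>?U" by blast
  have "\<forall>A\<in>Alg. p A = p0 A"
  proof
    fix A assume "A \<in> Alg"
    then have "restrict p Alg \<in> ?Z A" using p(2) by blast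
    then show "p A = p0 A" using \<open>A \<in> Alg\<close> by simp
  qed
  moreover have "p \<in> fa_probs Alg" using p gp unfolding good_prior_set_def by blast
  ultimately have "p = p0"
  proof -
    assume a: "\<forall>A\<in>Alg. p A = p0 A" "p \<in> fa_probs Alg"
    show "p = p0"
    proof
      fix A show "p A = p0 A"
        using a p0 unfolding fa_probs_def by (cases "A \<in> Alg") auto
    qed
  qed
  then show False using p nC by simp
qed


lemma lin_sep:
  assumes alg: "algebra UNIV Alg" and gp: "good_prior_set Alg C" and ne: "C \<noteq> {}"
    and p0: "p0 \<in> fa_probs Alg" and nC: "p0 \<notin> C"
  shows "\<exists>F w \<delta>. finite F \<and> F \<subseteq> Alg \<and> \<delta> > 0 \<and>
           (\<forall>p\<in>C. (\<Sum>A\<in>F. w A * p0 A) + \<delta> \<le> (\<Sum>A\<in>F. w A * p A))"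
proof -
  obtain F where F: "finite F" "F \<subseteq> Alg" "\<forall>p\<in>C. \<exists>A\<in>F. p A \<noteq> p0 A"
    using fip_sep[OF alg gp ne p0 nC] by blast
  define d where "d = (\<lambda>p::'a set \<Rightarrow> real. \<Sum>A\<in>F. (p A - p0 A)^2)"
  have "compact (d ` C)"
  proof (rule img_compact)
    show "wstar_compact Alg C" using gp unfolding good_prior_set_def by blast
    show "continuous_map (PTop Alg) euclideanreal (\<lambda>q. \<Sum>A\<in>F. (q A - p0 A)^2)"
      using F by (intro continuous_map_sum continuous_map_real_pow continuous_map_diff
          continuous_map_product_projection continuous_map_canonical_const) auto
    show "\<forall>p\<in>C. d p = (\<Sum>A\<in>F. (restrict p Alg A - p0 A)^2)"
      using F unfolding d_def by (auto intro!: sum.cong)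
  qed
  then obtain ps where ps: "ps \<in> C" "\<forall>q\<in>C. d ps \<le> d q"
    using compact_attains_inf[of "d ` C"] ne by auto
  define w where "w = (\<lambda>A. ps A - p0 A)"
  have dps: "d ps = (\<Sum>A\<in>F. w A * w A)" unfolding d_def w_def by (simp add: power2_eq_square)
  have dpos: "d ps > 0"
  proof -
    obtain A where A: "A \<in> F" "ps A \<noteq> p0 A" using F(3) ps(1) by blast
    have "0 < (ps A - p0 A)^2" using A by simp
    also have "\<dots> \<le> d ps" unfolding d_def
      by (rule member_le_sum[OF A(1)]) (auto simp: F(1))
    finally show ?thesis .
  qed
  have key: "0 \<le> (\<Sum>A\<in>F. w A * (p A - ps A))" if p: "p \<in> C" for p
  proof (rule ccontr)
    let ?L = "\<Sum>A\<in>F. w A * (p A - ps A)"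
    let ?Q = "\<Sum>A\<in>F. (p A - ps A) * (p A - ps A)"
    assume "\<not> 0 \<le> ?L"
    then have L: "?L < 0" by simp
    have Q: "0 \<le> ?Q" by (intro sum_nonneg) auto
    define t where "t = min 1 (- ?L / (?Q + 1))"
    have t0: "0 < t" unfolding t_def using L Q by (simp add: field_simps)
    have t1: "t \<le> 1" unfolding t_def by simp
    have tQ: "t * ?Q \<le> - ?L"
    proof -
      have "t * ?Q \<le> (- ?L / (?Q + 1)) * ?Q" unfolding t_def using Q by (intro mult_right_mono) auto
      also have "\<dots> \<le> - ?L" using L Q by (simp add: field_simps)
      finally show ?thesis .
    qed
    define pt where "pt = (\<lambda>A. t * p A + (1 - t) * ps A)"
    have ptC: "pt \<in> C" using gp p ps(1) t0 t1 unfolding good_prior_set_def convex_probs_def pt_def by auto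
    have "d pt = (\<Sum>A\<in>F. (t * (p A - ps A) + w A)^2)"
      unfolding d_def pt_def w_def by (intro sum.cong) (auto simp: algebra_simps)
    also have "\<dots> = (\<Sum>A\<in>F. w A * w A + (2 * t) * (w A * (p A - ps A)) + (t * t) * ((p A - ps A) * (p A - ps A)))"
      by (intro sum.cong) (auto simp: power2_eq_square algebra_simps)
    also have "\<dots> = d ps + 2 * t * ?L + t * t * ?Q"
      unfolding dps by (simp add: sum.distrib sum_distrib_left)
    finally have "d pt = d ps + 2 * t * ?L + t * t * ?Q" .
    moreover have "d ps \<le> d pt" using ps(2) ptC by blast
    ultimately have "0 \<le> t * (2 * ?L + t * ?Q)" by (simp add: algebra_simps)
    then have "0 \<le> 2 * ?L + t * ?Q" using t0 by (simp add: zero_le_mult_iff)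
    then show False using tQ L by linarith
  qed
  show ?thesis
  proof (intro exI conjI ballI)
    show "finite F" "F \<subseteq> Alg" "d ps > 0" by (fact F(1), fact F(2), fact dpos)
    fix p assume p: "p \<in> C"
    have "(\<Sum>A\<in>F. w A * p A) = (\<Sum>A\<in>F. w A * p0 A) + d ps + (\<Sum>A\<in>F. w A * (p A - ps A))"
    proof -
      have "(\<Sum>A\<in>F. w A * p A) = (\<Sum>A\<in>F. w A * p0 A + w A * w A + w A * (p A - ps A))"
        by (intro sum.cong) (auto simp: w_def algebra_simps)
      then show ?thesis unfolding dps by (simp add: sum.distrib)
    qed
    then show "(\<Sum>A\<in>F. w A * p0 A) + d ps \<le> (\<Sum>A\<in>F. w A * p A)" using key[OF p] by simp
  qed
qed


lemma sep_fun:
  assumes alg: "algebra UNIV Alg" and gp: "good_prior_set Alg C" and ne: "C \<noteq> {}"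
    and p0: "p0 \<in> fa_probs Alg" and nC: "p0 \<notin> C" and lh: "lo < (hi::real)"
  shows "\<exists>\<psi> c. smeas Alg \<psi> \<and> (\<forall>s. lo \<le> \<psi> s \<and> \<psi> s \<le> hi) \<and> lo \<le> c \<and> c \<le> hi
            \<and> (\<forall>p\<in>C. c < sint p \<psi>) \<and> sint p0 \<psi> < c"
proof -
  obtain F w \<delta> where F: "finite F" "F \<subseteq> Alg" "\<delta> > 0"
    "\<forall>p\<in>C. (\<Sum>A\<in>F. w A * p0 A) + \<delta> \<le> (\<Sum>A\<in>F. w A * p A)"
    using lin_sep[OF alg gp ne p0 nC] by blast
  define \<phi> where "\<phi> = (\<lambda>s. \<Sum>A\<in>F. w A * indicator A s :: real)"
  define M where "M = (\<Sum>A\<in>F. \<bar>w A\<bar>)"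
  have M0: "0 \<le> M" unfolding M_def by (intro sum_nonneg) auto
  have phiM: "\<bar>\<phi> s\<bar> \<le> M" for s
  proof -
    have "\<bar>\<phi> s\<bar> \<le> (\<Sum>A\<in>F. \<bar>w A * indicator A s\<bar>)" unfolding \<phi>_def by (rule sum_abs)
    also have "\<dots> \<le> M" unfolding M_def
      by (intro sum_mono) (auto simp: indicator_def abs_mult)
    finally show ?thesis .
  qed
  have sphi: "smeas Alg \<phi>" and iphi: "\<And>p. p \<in> fa_probs Alg \<Longrightarrow> sint p \<phi> = (\<Sum>A\<in>F. w A * p A)"
    using sint_lincomb[OF alg p0 F(1) F(2), of w] sint_lincomb[OF alg _ F(1) F(2), of _ w]
    unfolding \<phi>_def by blast+
  define k where "k = (hi - lo) / (2 * (M + 1))"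
  define mid where "mid = (lo + hi) / 2"
  have k0: "0 < k" unfolding k_def using lh M0 by simp
  define \<psi> where "\<psi> = (\<lambda>s. mid * 1 + k * \<phi> s)"
  have s1: "smeas Alg (\<lambda>s. 1::real)" by (rule smeas_const[OF alg])
  have spsi: "smeas Alg \<psi>" unfolding \<psi>_def by (rule smeas_comb[OF alg s1 sphi])
  have ipsi: "sint p \<psi> = mid + k * (\<Sum>A\<in>F. w A * p A)" if "p \<in> fa_probs Alg" for p
    unfolding \<psi>_def using sint_lin[OF alg that s1 sphi] sint_const[OF alg that] iphi[OF that] by simp
  have kM: "k * M < (hi - lo) / 2"
  proof -
    have "k * M = (hi - lo) / 2 * (M / (M + 1))" unfolding k_def using M0 by (simp add: field_simps)
    also have "\<dots> < (hi - lo) / 2 * 1" using lh M0 by (intro mult_strict_left_mono) auto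
    finally show ?thesis by simp
  qed
  have rng: "lo \<le> \<psi> s \<and> \<psi> s \<le> hi" for s
  proof -
    have "\<bar>k * \<phi> s\<bar> \<le> k * M" using phiM[of s] k0 by (simp add: abs_mult)
    then have a: "-(k*M) \<le> k * \<phi> s" "k * \<phi> s \<le> k * M" by (auto simp: abs_le_iff)
    show ?thesis unfolding \<psi>_def mid_def mult_1_right using a kM by (auto simp: field_simps)
  qed
  define c where "c = mid + k * ((\<Sum>A\<in>F. w A * p0 A) + \<delta> / 2)"
  have c1: "sint p0 \<psi> < c" unfolding c_def ipsi[OF p0] using k0 F(3) by simp
  have c2: "c < sint p \<psi>" if "p \<in> C" for p
  proof -
    have pf: "p \<in> fa_probs Alg" using that gp unfolding good_prior_set_def by blast
    have "k * ((\<Sum>A\<in>F. w A * p0 A) + \<delta> / 2) < k * (\<Sum>A\<in>F. w A * p A)"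
      using F(3,4) that k0 by (intro mult_strict_left_mono) auto
    then show ?thesis unfolding c_def ipsi[OF pf] by simp
  qed
  have "lo \<le> sint p0 \<psi>" using sint_bounds[OF alg p0 spsi, of lo hi] rng by blast
  moreover obtain p1 where "p1 \<in> C" using ne by blast
  moreover then have "sint p1 \<psi> \<le> hi"
    using sint_bounds[OF alg _ spsi, of p1 lo hi] rng gp unfolding good_prior_set_def by blast
  ultimately show ?thesis using c1 c2 spsi rng
    by (intro exI[of _ \<psi>] exI[of _ c]) force
qed

lemma sep_fun2:
  assumes alg: "algebra UNIV Alg" and gp: "good_prior_set Alg C" and ne: "C \<noteq> {}"
    and p0: "p0 \<in> fa_probs Alg" and nC: "p0 \<notin> C" and lh: "lo < (hi::real)"
  shows "\<exists>\<psi> c. smeas Alg \<psi> \<and> (\<forall>s. lo \<le> \<psi> s \<and> \<psi> s \<le> hi) \<and> lo \<le> c \<and> c \<le> hi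
            \<and> (\<forall>p\<in>C. sint p \<psi> < c) \<and> c < sint p0 \<psi>"
proof -
  obtain \<psi> c where H: "smeas Alg \<psi>" "\<forall>s. lo \<le> \<psi> s \<and> \<psi> s \<le> hi" "lo \<le> c" "c \<le> hi"
    "\<forall>p\<in>C. c < sint p \<psi>" "sint p0 \<psi> < c"
    using sep_fun[OF assms] by blast
  define xi where "xi = (\<lambda>s. (lo + hi) * 1 + (-1) * \<psi> s)"
  have s1: "smeas Alg (\<lambda>s. 1::real)" by (rule smeas_const[OF alg])
  have sc: "smeas Alg xi" unfolding xi_def by (rule smeas_comb[OF alg s1 H(1)])
  have ic: "sint p xi = lo + hi - sint p \<psi>" if "p \<in> fa_probs Alg" for p
    unfolding xi_def using sint_lin[OF alg that s1 H(1), of "lo+hi" "-1"] sint_const[OF alg that] by simp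
  have "\<forall>p\<in>C. sint p xi < lo + hi - c"
    using ic H(5) gp unfolding good_prior_set_def by fastforce
  moreover have "lo + hi - c < sint p0 xi" using ic[OF p0] H(6) by simp
  moreover have "\<forall>s. lo \<le> xi s \<and> xi s \<le> hi" using H(2) unfolding xi_def by auto
  ultimately show ?thesis using sc H(3,4)
    by (intro exI[of _ xi] exI[of _ "lo + hi - c"]) auto
qed

lemma act_of:
  assumes alg: "algebra UNIV Alg" and cX: "convex X" and x1: "x1 \<in> X" and y1: "y1 \<in> X"
    and aff: "affine_on X u" and lt: "u x1 < u y1"
    and sp: "smeas Alg \<psi>" and rng: "\<forall>s. u x1 \<le> \<psi> s \<and> \<psi> s \<le> u y1"
  shows "\<exists>f\<in>simple_acts Alg X. u \<circ> f = \<psi>"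
proof -
  define t where "t = (\<lambda>r. (r - u x1) / (u y1 - u x1))"
  define m where "m = (\<lambda>r. t r *\<^sub>R y1 + (1 - t r) *\<^sub>R x1)"
  define f where "f = (\<lambda>s. m (\<psi> s))"
  have t01: "0 \<le> t (\<psi> s) \<and> t (\<psi> s) \<le> 1" for s
    using rng lt unfolding t_def by (auto simp: field_simps)
  have inX: "f s \<in> X" for s
    using t01[of s] cX x1 y1 unfolding f_def m_def convex_def by auto
  have uf: "u (f s) = \<psi> s" for s
  proof -
    have "u (f s) = t (\<psi> s) * u y1 + (1 - t (\<psi> s)) * u x1"
      using aff t01[of s] x1 y1 unfolding f_def m_def affine_on_def by blast
    also have "\<dots> = u x1 + t (\<psi> s) * (u y1 - u x1)" by (simp add: algebra_simps)
    also have "\<dots> = \<psi> s" unfolding t_def using lt by simp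
    finally show ?thesis .
  qed
  have "smeas Alg f" unfolding f_def by (rule smeas_map[OF alg sp])
  then have "f \<in> simple_acts Alg X" using inX unfolding simple_acts_def smeas_def by auto
  moreover have "u \<circ> f = \<psi>" using uf by auto
  ultimately show ?thesis by blast
qed


lemma minE_const:
  assumes alg: "algebra UNIV Alg" and gp: "good_prior_set Alg C" and ne: "C \<noteq> {}"
  shows "minE C (\<lambda>s. c) = c" "maxE C (\<lambda>s. c) = c"
proof -
  have "(\<lambda>p. sint p (\<lambda>s. c)) ` C = (\<lambda>p. c) ` C"
    using gp sint_const[OF alg] unfolding good_prior_set_def by (intro image_cong) auto
  also have "\<dots> = {c}" using ne by blast
  finally have "(\<lambda>p. sint p (\<lambda>s. c)) ` C = {c}" .
  then show "minE C (\<lambda>s. c) = c" "maxE C (\<lambda>s. c) = c" unfolding minE_def maxE_def by simp_all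
qed

theorem proposition1:
  fixes Alg :: "'s set set" and X :: "'x::real_vector set" and u :: "'x \<Rightarrow> real"
    and PHP PT PB :: "('s \<Rightarrow> 'x) \<Rightarrow> ('s \<Rightarrow> 'x) \<Rightarrow> bool"
    and CHP DHP CT DT CB :: "('s set \<Rightarrow> real) set"
  assumes "algebra UNIV Alg"
    and "convex X" and "\<exists>x\<in>X. \<exists>y\<in>X. x \<noteq> y"
    and "affine_on X u" and "\<exists>x\<in>X. \<exists>y\<in>X. u x \<noteq> u y"
    and "HP_unique_rep Alg X PHP u CHP DHP"
    and "TM_unique_rep Alg X PT u CT DT"
    and "B_unique_rep Alg X PB u CB"
  shows "(more_conservative (simple_acts Alg X) PB PHP \<longleftrightarrow> CHP \<union> DHP \<subseteq> CB)
       \<and> (more_conservative (simple_acts Alg X) PT PHP \<longleftrightarrow> CHP \<subseteq> CT \<and> DHP \<subseteq> DT)"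
proof -
  note alg = assms(1) and cX = assms(2) and aff = assms(4)
  obtain x1 y1 where xy: "x1 \<in> X" "y1 \<in> X" "u x1 < u y1"
  proof -
    obtain x y where "x \<in> X" "y \<in> X" "u x \<noteq> u y" using assms(5) by blast
    then show ?thesis using that by (cases "u x < u y") (auto simp: neq_iff)
  qed
  let ?U = "simple_acts Alg X"
  have HP: "good_prior_set Alg CHP" "good_prior_set Alg DHP" "CHP \<inter> DHP \<noteq> {}"
    "\<And>f g. f \<in> ?U \<Longrightarrow> g \<in> ?U \<Longrightarrow> PHP f g \<longleftrightarrow> minE CHP (u \<circ> f) > minE CHP (u \<circ> g) \<and> maxE DHP (u \<circ> f) > maxE DHP (u \<circ> g)"
    using assms(6) unfolding HP_unique_rep_def HP_rep_def by blast+
  have TM: "good_prior_set Alg CT" "good_prior_set Alg DT" "CT \<inter> DT \<noteq> {}"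
    "\<And>f g. f \<in> ?U \<Longrightarrow> g \<in> ?U \<Longrightarrow> PT f g \<longleftrightarrow> minE CT (u \<circ> f) > maxE DT (u \<circ> g)"
    using assms(7) unfolding TM_unique_rep_def TM_rep_def by blast+
  have BB: "good_prior_set Alg CB" "CB \<noteq> {}"
    "\<And>f g. f \<in> ?U \<Longrightarrow> g \<in> ?U \<Longrightarrow> PB f g \<longleftrightarrow> (\<forall>p\<in>CB. sint p (u \<circ> f) > sint p (u \<circ> g))"
    using assms(8) unfolding B_unique_rep_def B_rep_def by blast+
  have neCHP: "CHP \<noteq> {}" and neDHP: "DHP \<noteq> {}" using HP(3) by auto
  have neCT: "CT \<noteq> {}" and neDT: "DT \<noteq> {}" using TM(3) by auto
  have fa: "\<And>C p. good_prior_set Alg C \<Longrightarrow> p \<in> C \<Longrightarrow> p \<in> fa_probs Alg"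
    unfolding good_prior_set_def by blast
  have sm: "smeas Alg (u \<circ> f)" if "f \<in> ?U" for f
  proof -
    have "smeas Alg f" using that unfolding simple_acts_def smeas_def by blast
    then have "smeas Alg (\<lambda>s. u (f s))" by (rule smeas_map[OF alg])
    then show ?thesis by (simp add: comp_def)
  qed
  have act: "\<exists>f\<in>?U. u \<circ> f = \<psi>" if "smeas Alg \<psi>" "\<forall>s. u x1 \<le> \<psi> s \<and> \<psi> s \<le> u y1" for \<psi>
    using act_of[OF alg cX xy(1,2) aff xy(3) that] .
  have cact: "\<exists>f\<in>?U. u \<circ> f = (\<lambda>s. c)" if "u x1 \<le> c" "c \<le> u y1" for c
    using act[OF smeas_const[OF alg]] that by blast
  have part1: "more_conservative ?U PB PHP \<longleftrightarrow> CHP \<union> DHP \<subseteq> CB"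
  proof
    assume mc: "more_conservative ?U PB PHP"
    show "CHP \<union> DHP \<subseteq> CB"
    proof
      fix p0 assume p0: "p0 \<in> CHP \<union> DHP"
      show "p0 \<in> CB"
      proof (rule ccontr)
        assume nB: "p0 \<notin> CB"
        show False
        proof (cases "p0 \<in> CHP")
          case True
          have p0f: "p0 \<in> fa_probs Alg" using fa[OF HP(1) True] .
          obtain \<psi> c where H: "smeas Alg \<psi>" "\<forall>s. u x1 \<le> \<psi> s \<and> \<psi> s \<le> u y1" "u x1 \<le> c" "c \<le> u y1"
            "\<forall>p\<in>CB. c < sint p \<psi>" "sint p0 \<psi> < c"
            using sep_fun[OF alg BB(1) BB(2) p0f nB xy(3)] by blast
          obtain f where f: "f \<in> ?U" "u \<circ> f = \<psi>" using act[OF H(1,2)] by blast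
          obtain g where g: "g \<in> ?U" "u \<circ> g = (\<lambda>s. c)" using cact[OF H(3,4)] by blast
          have "PB f g" using BB(3)[OF f(1) g(1)] f(2) g(2) H(5) sint_const[OF alg] fa[OF BB(1)] by auto
          then have "PHP f g" using mc f(1) g(1) unfolding more_conservative_def by blast
          then have "minE CHP \<psi> > c" using HP(4)[OF f(1) g(1)] f(2) g(2) minE_const[OF alg HP(1) neCHP] by simp
          moreover have "minE CHP \<psi> \<le> sint p0 \<psi>" using minE_att[OF HP(1) neCHP H(1)] True by blast
          ultimately show False using H(6) by simp
        next
          case False
          then have p0D: "p0 \<in> DHP" using p0 by blast
          have p0f: "p0 \<in> fa_probs Alg" using fa[OF HP(2) p0D] .
          obtain \<psi> c where H: "smeas Alg \<psi>" "\<forall>s. u x1 \<le> \<psi> s \<and> \<psi> s \<le> u y1" "u x1 \<le> c" "c \<le> u y1"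
            "\<forall>p\<in>CB. sint p \<psi> < c" "c < sint p0 \<psi>"
            using sep_fun2[OF alg BB(1) BB(2) p0f nB xy(3)] by blast
          obtain g where g: "g \<in> ?U" "u \<circ> g = \<psi>" using act[OF H(1,2)] by blast
          obtain f where f: "f \<in> ?U" "u \<circ> f = (\<lambda>s. c)" using cact[OF H(3,4)] by blast
          have "PB f g" using BB(3)[OF f(1) g(1)] f(2) g(2) H(5) sint_const[OF alg] fa[OF BB(1)] by auto
          then have "PHP f g" using mc f(1) g(1) unfolding more_conservative_def by blast
          then have "c > maxE DHP \<psi>" using HP(4)[OF f(1) g(1)] f(2) g(2) minE_const[OF alg HP(2) neDHP] by simp
          moreover have "sint p0 \<psi> \<le> maxE DHP \<psi>" using maxE_att[OF HP(2) neDHP H(1)] p0D by blast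
          ultimately show False using H(6) by simp
        qed
      qed
    qed
  next
    assume sub: "CHP \<union> DHP \<subseteq> CB"
    show "more_conservative ?U PB PHP" unfolding more_conservative_def
    proof (intro ballI impI)
      fix f g assume f: "f \<in> ?U" and g: "g \<in> ?U" and pb: "PB f g"
      have all: "\<forall>p\<in>CB. sint p (u \<circ> f) > sint p (u \<circ> g)" using BB(3)[OF f g] pb by blast
      obtain p1 where p1: "p1 \<in> CHP" "minE CHP (u \<circ> f) = sint p1 (u \<circ> f)"
        using minE_att[OF HP(1) neCHP sm[OF f]] by blast
      have "minE CHP (u \<circ> g) \<le> sint p1 (u \<circ> g)" using minE_att[OF HP(1) neCHP sm[OF g]] p1(1) by blast
      moreover have "sint p1 (u \<circ> g) < sint p1 (u \<circ> f)" using all sub p1(1) by blast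
      ultimately have m: "minE CHP (u \<circ> g) < minE CHP (u \<circ> f)" using p1(2) by simp
      obtain q1 where q1: "q1 \<in> DHP" "maxE DHP (u \<circ> g) = sint q1 (u \<circ> g)"
        using maxE_att[OF HP(2) neDHP sm[OF g]] by blast
      have "sint q1 (u \<circ> f) \<le> maxE DHP (u \<circ> f)" using maxE_att[OF HP(2) neDHP sm[OF f]] q1(1) by blast
      moreover have "sint q1 (u \<circ> g) < sint q1 (u \<circ> f)" using all sub q1(1) by blast
      ultimately have "maxE DHP (u \<circ> g) < maxE DHP (u \<circ> f)" using q1(2) by simp
      then show "PHP f g" using HP(4)[OF f g] m by simp
    qed
  qed
  have part2: "more_conservative ?U PT PHP \<longleftrightarrow> CHP \<subseteq> CT \<and> DHP \<subseteq> DT"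
  proof
    assume mc: "more_conservative ?U PT PHP"
    show "CHP \<subseteq> CT \<and> DHP \<subseteq> DT"
    proof
      show "CHP \<subseteq> CT"
      proof
        fix p0 assume p0: "p0 \<in> CHP"
        show "p0 \<in> CT"
        proof (rule ccontr)
          assume nC: "p0 \<notin> CT"
          have p0f: "p0 \<in> fa_probs Alg" using fa[OF HP(1) p0] .
          obtain \<psi> c where H: "smeas Alg \<psi>" "\<forall>s. u x1 \<le> \<psi> s \<and> \<psi> s \<le> u y1" "u x1 \<le> c" "c \<le> u y1"
            "\<forall>p\<in>CT. c < sint p \<psi>" "sint p0 \<psi> < c"
            using sep_fun[OF alg TM(1) neCT p0f nC xy(3)] by blast
          obtain f where f: "f \<in> ?U" "u \<circ> f = \<psi>" using act[OF H(1,2)] by blast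
          obtain g where g: "g \<in> ?U" "u \<circ> g = (\<lambda>s. c)" using cact[OF H(3,4)] by blast
          obtain pm where "pm \<in> CT" "minE CT \<psi> = sint pm \<psi>" using minE_att[OF TM(1) neCT H(1)] by blast
          then have "minE CT \<psi> > c" using H(5) by simp
          then have "PT f g" using TM(4)[OF f(1) g(1)] f(2) g(2) minE_const[OF alg TM(2) neDT] by simp
          then have "PHP f g" using mc f(1) g(1) unfolding more_conservative_def by blast
          then have "minE CHP \<psi> > c" using HP(4)[OF f(1) g(1)] f(2) g(2) minE_const[OF alg HP(1) neCHP] by simp
          moreover have "minE CHP \<psi> \<le> sint p0 \<psi>" using minE_att[OF HP(1) neCHP H(1)] p0 by blast
          ultimately show False using H(6) by simp
        qed
      qed
      show "DHP \<subseteq> DT"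
      proof
        fix p0 assume p0: "p0 \<in> DHP"
        show "p0 \<in> DT"
        proof (rule ccontr)
          assume nC: "p0 \<notin> DT"
          have p0f: "p0 \<in> fa_probs Alg" using fa[OF HP(2) p0] .
          obtain \<psi> c where H: "smeas Alg \<psi>" "\<forall>s. u x1 \<le> \<psi> s \<and> \<psi> s \<le> u y1" "u x1 \<le> c" "c \<le> u y1"
            "\<forall>p\<in>DT. sint p \<psi> < c" "c < sint p0 \<psi>"
            using sep_fun2[OF alg TM(2) neDT p0f nC xy(3)] by blast
          obtain g where g: "g \<in> ?U" "u \<circ> g = \<psi>" using act[OF H(1,2)] by blast
          obtain f where f: "f \<in> ?U" "u \<circ> f = (\<lambda>s. c)" using cact[OF H(3,4)] by blast
          obtain pm where "pm \<in> DT" "maxE DT \<psi> = sint pm \<psi>" using maxE_att[OF TM(2) neDT H(1)] by blast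
          then have "maxE DT \<psi> < c" using H(5) by simp
          then have "PT f g" using TM(4)[OF f(1) g(1)] f(2) g(2) minE_const[OF alg TM(1) neCT] by simp
          then have "PHP f g" using mc f(1) g(1) unfolding more_conservative_def by blast
          then have "c > maxE DHP \<psi>" using HP(4)[OF f(1) g(1)] f(2) g(2) minE_const[OF alg HP(2) neDHP] by simp
          moreover have "sint p0 \<psi> \<le> maxE DHP \<psi>" using maxE_att[OF HP(2) neDHP H(1)] p0 by blast
          ultimately show False using H(6) by simp
        qed
      qed
    qed
  next
    assume sub: "CHP \<subseteq> CT \<and> DHP \<subseteq> DT"
    obtain p where p: "p \<in> CHP" "p \<in> DHP" using HP(3) by blast
    show "more_conservative ?U PT PHP" unfolding more_conservative_def
    proof (intro ballI impI)
      fix f g assume f: "f \<in> ?U" and g: "g \<in> ?U" and pt: "PT f g"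
      have t: "minE CT (u \<circ> f) > maxE DT (u \<circ> g)" using TM(4)[OF f g] pt by blast
      obtain p1 where p1: "p1 \<in> CHP" "minE CHP (u \<circ> f) = sint p1 (u \<circ> f)"
        using minE_att[OF HP(1) neCHP sm[OF f]] by blast
      have a1: "minE CT (u \<circ> f) \<le> minE CHP (u \<circ> f)"
        using minE_att[OF TM(1) neCT sm[OF f]] p1 sub by auto
      obtain q1 where q1: "q1 \<in> DHP" "maxE DHP (u \<circ> g) = sint q1 (u \<circ> g)"
        using maxE_att[OF HP(2) neDHP sm[OF g]] by blast
      have a2: "maxE DHP (u \<circ> g) \<le> maxE DT (u \<circ> g)"
        using maxE_att[OF TM(2) neDT sm[OF g]] q1 sub by auto
      have a3: "minE CHP (u \<circ> g) \<le> maxE DHP (u \<circ> g)"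
        using minE_att[OF HP(1) neCHP sm[OF g]] maxE_att[OF HP(2) neDHP sm[OF g]] p by fastforce
      have a4: "minE CHP (u \<circ> f) \<le> maxE DHP (u \<circ> f)"
        using minE_att[OF HP(1) neCHP sm[OF f]] maxE_att[OF HP(2) neDHP sm[OF f]] p by fastforce
      show "PHP f g" using HP(4)[OF f g] t a1 a2 a3 a4 by linarith
    qed
  qed
  show ?thesis using part1 part2 by blast
qed

end
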